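(* Let $\mathcal X$ be a barreled topological real vector space, $\sigma$ a symplectic form on $\mathcal X$, $\mathcal X_{\rm bulk}\subset\mathcal X$ a linear subspace, $\mathcal X_{\rm bd}$ a topological real vector space, and $\partial:\mathcal X_{\rm bulk}'\to\mathcal X_{\rm bd}'$ a linear map whose restriction to $\mathcal X'$ (each $u\in\mathcal X'$ being regarded as an element of $\mathcal X_{\rm bulk}'$ by restriction to $\mathcal X_{\rm bulk}$) is continuous $\mathcal X'\to\mathcal X_{\rm bd}'$. Let $\eta$ be a symmetric bilinear form on $\mathcal X$ which is strictly positive ($(v\cdot\eta v)>0$ for $v\neq0$) and satisfies $|v_1\cdot\sigma v_2|\le (v_1\cdot\eta v_1)^{1/2}(v_2\cdot\eta v_2)^{1/2}$ for all $v_1,v_2\in\mathcal X$. Let $\mathcal X^{\rm cpl}$ be the real Hilbert space completion of $\mathcal X$ with respect to the inner product $\eta$, with extended inner product $\eta^{\rm cpl}$ (so $\mathcal X\subset\mathcal X^{\rm cpl}$). Assume (Hypothesis 1) that the map $\eta:\mathcal X\to\mathcal X'$, $v\mapsto (w\mapsto w\cdot\eta v)$, is continuous. Then: (i) for every $\tilde u\in\mathcal X^{\rm cpl}$ the functional $\eta^{\rm cpl}\tilde u: v\mapsto (v\cdot\eta^{\rm cpl}\tilde u)$ on $\mathcal X$ belongs to $\mathcal X'$, and for every $f\in\mathcal X_{\rm bd}$ the linear functional $\mathcal X^{\rm cpl}\ni\tilde u\mapsto \big(\partial(\eta^{\rm cpl}\tilde u)\big)(f)$ is continuous; hence there is a unique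 element $\partial' f\in\mathcal X^{\rm cpl}$ with $(\partial'f\cdot\eta^{\rm cpl}\tilde u)=\big(\partial(\eta^{\rm cpl}\tilde u)\big)(f)$ for all $\tilde u\in\mathcal X^{\rm cpl}$, i.e. $\mathrm{Ran}(\partial'\restriction\mathcal X_{\rm bd})\subset\mathcal X^{\rm cpl}$. (ii) If moreover (Hypothesis 2) for every $u\in\mathcal X'$ the condition $\partial u=0$ implies that $u$ vanishes on $\mathcal X_{\rm bulk}$, then $$\big(\{\partial'f: f\in\mathcal X_{\rm bd}\}\big)^{\rm cl}\supset(\mathcal X_{\rm bulk})^{\rm cl},$$ where both closures are taken in the Hilbert space $\mathcal X^{\rm cpl}$.
   Context: For a topological real vector space $\mathcal Y$, $\mathcal Y'$ denotes its continuous dual equipped with the weak$^*$ topology. For a bilinear form $\eta$ on $\mathcal X$, $(v_1\cdot\eta v_2)$ denotes its value on $v_1,v_2$. The map $\partial'$ is the dual of $\partial$; on $\mathcal X_{\rm bd}$ it is understood via the identification in (i). *)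

theory Defs
  imports "HOL-Analysis.Analysis"
begin

definition tvs :: "'a::real_vector topology \<Rightarrow> bool" where
  "tvs T \<longleftrightarrow> topspace T = UNIV
     \<and> continuous_map (prod_topology T T) T (\<lambda>(x, y). x + y)
     \<and> continuous_map (prod_topology euclideanreal T) T (\<lambda>(c, x). c *\<^sub>R x)"

definition barrel :: "'a::real_vector topology \<Rightarrow> 'a set \<Rightarrow> bool" where
  "barrel T B \<longleftrightarrow> closedin T B \<and> convex B
     \<and> (\<forall>c x. \<bar>c\<bar> \<le> 1 \<longrightarrow> x \<in> B \<longrightarrow> c *\<^sub>R x \<in> B)
     \<and> (\<forall>x. \<exists>e>0. \<forall>t. \<bar>t\<bar> \<le> e \<longrightarrow> t *\<^sub>R x \<in> B)"

definition barreled :: "'a::real_vector topology \<Rightarrow> bool" where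
  "barreled T \<longleftrightarrow> tvs T \<and>
     (\<forall>B. barrel T B \<longrightarrow> (\<exists>U. openin T U \<and> 0 \<in> U \<and> U \<subseteq> B))"

definition cdual :: "'a::real_vector topology \<Rightarrow> ('a \<Rightarrow> real) set" where
  "cdual T = {u. linear u \<and> continuous_map T euclideanreal u}"

text \<open>Continuous dual of a linear subspace S (with subspace topology); functionals are
  represented by functions vanishing outside S.\<close>
definition sdual :: "'a::real_vector topology \<Rightarrow> 'a set \<Rightarrow> ('a \<Rightarrow> real) set" where
  "sdual T S = {u. (\<forall>x\<in>S. \<forall>y\<in>S. u (x + y) = u x + u y)
                 \<and> (\<forall>c. \<forall>x\<in>S. u (c *\<^sub>R x) = c * u x)
                 \<and> continuous_map (subtopology T S) euclideanreal u
                 \<and> (\<forall>x. x \<notin> S \<longrightarrow> u x = 0)}"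

definition restr :: "'a set \<Rightarrow> ('a \<Rightarrow> real) \<Rightarrow> ('a \<Rightarrow> real)" where
  "restr S u = (\<lambda>x. if x \<in> S then u x else 0)"

definition weak_star :: "('a \<Rightarrow> real) set \<Rightarrow> ('a \<Rightarrow> real) topology" where
  "weak_star D = subtopology (product_topology (\<lambda>_. euclideanreal) UNIV) D"

definition symplectic_form :: "('a::real_vector \<Rightarrow> 'a \<Rightarrow> real) \<Rightarrow> bool" where
  "symplectic_form \<sigma> \<longleftrightarrow> (\<forall>v. linear (\<sigma> v)) \<and> (\<forall>w. linear (\<lambda>v. \<sigma> v w))
     \<and> (\<forall>v w. \<sigma> v w = - \<sigma> w v)
     \<and> (\<forall>v. (\<forall>w. \<sigma> v w = 0) \<longrightarrow> v = 0)"

end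

theory Submission
  imports Defs
begin


lemma parallelogram_h:
  fixes a b :: "'h::real_inner"
  shows "norm (a - b)^2 + norm (a + b)^2 = 2 * norm a ^2 + 2 * norm b ^2"
  by (simp add: power2_norm_eq_inner inner_add inner_diff inner_commute algebra_simps)

lemma closure_subspace_h:
  fixes A :: "'h::real_normed_vector set"
  assumes "subspace A" shows "subspace (closure A)"
  unfolding subspace_def
proof (intro conjI ballI allI)
  show "0 \<in> closure A" using assms closure_subset subspace_0 by blast
next
  fix x y assume "x \<in> closure A" "y \<in> closure A"
  then obtain f g where f: "\<forall>n. f n \<in> A" "f \<longlonglongrightarrow> x" and g: "\<forall>n. g n \<in> A" "g \<longlonglongrightarrow> y"
    by (meson closure_sequential)
  have "(\<lambda>n. f n + g n) \<longlonglongrightarrow> x + y" using f g by (intro tendsto_intros)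
  moreover have "\<forall>n. f n + g n \<in> A" using f g assms subspace_add by blast
  ultimately show "x + y \<in> closure A" by (meson closure_sequential)
next
  fix c :: real and x assume "x \<in> closure A"
  then obtain f where f: "\<forall>n. f n \<in> A" "f \<longlonglongrightarrow> x"
    by (meson closure_sequential)
  have "(\<lambda>n. c *\<^sub>R f n) \<longlonglongrightarrow> c *\<^sub>R x" using f by (intro tendsto_intros)
  moreover have "\<forall>n. c *\<^sub>R f n \<in> A" using f assms subspace_scale by blast
  ultimately show "c *\<^sub>R x \<in> closure A" by (meson closure_sequential)
qed

lemma projection_h:
  fixes M :: "'h::{real_inner, complete_space} set"
  assumes cl: "closed M" and sub: "subspace M"
  shows "\<exists>m\<in>M. \<forall>y\<in>M. inner (x - m) y = 0"
proof -
  define S where "S = (\<lambda>m. norm (x - m)^2) ` M"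
  define d where "d = Inf S"
  have Sne: "S \<noteq> {}" using sub subspace_0 S_def by blast
  have Sbd: "bdd_below S" unfolding S_def by (rule bdd_belowI[of _ 0]) auto
  have dle: "d \<le> norm (x - m)^2" if "m \<in> M" for m
    unfolding d_def S_def using that Sbd[unfolded S_def] by (intro cInf_lower) auto
  have "\<exists>m\<in>M. norm (x - m)^2 < d + inverse (real (Suc n))" for n
  proof -
    have "Inf S < d + inverse (real (Suc n))" unfolding d_def by simp
    from cInf_lessD[OF Sne this] show ?thesis unfolding S_def by auto
  qed
  then obtain ms where ms: "\<And>n. ms n \<in> M" "\<And>n. norm (x - ms n)^2 < d + inverse (real (Suc n))"
    by metis
  have mid: "norm (ms n - ms k)^2 \<le> 2 * inverse (real (Suc n)) + 2 * inverse (real (Suc k))" for n k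
  proof -
    have "(1/2) *\<^sub>R (ms n + ms k) \<in> M" using sub ms(1) by (simp add: subspace_add subspace_scale)
    from dle[OF this] have "d \<le> norm (x - (1/2) *\<^sub>R (ms n + ms k))^2" .
    moreover have "(x - ms n) + (x - ms k) = 2 *\<^sub>R (x - (1/2) *\<^sub>R (ms n + ms k))"
      by (simp add: algebra_simps scaleR_2)
    hence "norm ((x - ms n) + (x - ms k))^2 = 4 * norm (x - (1/2) *\<^sub>R (ms n + ms k))^2"
      by (simp add: power_mult_distrib)
    moreover have "norm (ms n - ms k)^2 + norm ((x - ms n) + (x - ms k))^2 = 2 * norm (x - ms n)^2 + 2 * norm (x - ms k)^2"
    proof -
      have "(x - ms n) - (x - ms k) = -(ms n - ms k)" by simp
      hence "norm ((x - ms n) - (x - ms k)) = norm (ms n - ms k)" by (metis norm_minus_cancel)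
      thus ?thesis using parallelogram_h[of "x - ms n" "x - ms k"] by simp
    qed
    moreover note ms(2)[of n] ms(2)[of k]
    ultimately show ?thesis by linarith
  qed
  have "Cauchy ms"
  proof (rule CauchyI)
    fix e :: real assume e: "e > 0"
    obtain N where N: "inverse (real (Suc N)) < e^2 / 4"
      using reals_Archimedean e by (metis divide_pos_pos zero_less_numeral zero_less_power)
    show "\<exists>N. \<forall>m\<ge>N. \<forall>n\<ge>N. norm (ms m - ms n) < e"
    proof (intro exI allI impI)
      fix a b assume a: "a \<ge> N" and b: "b \<ge> N"
      have "inverse (real (Suc a)) \<le> inverse (real (Suc N))" using a by (simp add: field_simps)
      moreover have "inverse (real (Suc b)) \<le> inverse (real (Suc N))" using b by (simp add: field_simps)
      ultimately have "norm (ms a - ms b)^2 < e^2" using mid[of a b] N by linarith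
      thus "norm (ms a - ms b) < e" using e by (simp add: power_less_imp_less_base)
    qed
  qed
  then obtain m where lim: "ms \<longlonglongrightarrow> m" using Cauchy_convergent_iff convergent_def by blast
  have mM: "m \<in> M" using cl ms(1) lim closed_sequentially by blast
  have best: "norm (x - m)^2 \<le> norm (x - m')^2" if "m' \<in> M" for m'
  proof (rule LIMSEQ_le)
    show "(\<lambda>n. norm (x - ms n)^2) \<longlonglongrightarrow> norm (x - m)^2" using lim by (intro tendsto_intros)
    show "(\<lambda>n. norm (x - m')^2 + inverse (real (Suc n))) \<longlonglongrightarrow> norm (x - m')^2"
      using tendsto_add[OF tendsto_const LIMSEQ_inverse_real_of_nat] by simp
    show "\<exists>N. \<forall>n\<ge>N. norm (x - ms n)^2 \<le> norm (x - m')^2 + inverse (real (Suc n))"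
    proof (intro exI allI impI)
      fix n :: nat
      show "norm (x - ms n)^2 \<le> norm (x - m')^2 + inverse (real (Suc n))"
        using ms(2)[of n] dle[OF that] by linarith
    qed
  qed
  have "inner (x - m) y = 0" if yM: "y \<in> M" for y
  proof -
    define c where "c = inner (x - m) y"
    define s where "s = inner y y"
    have s0: "s \<ge> 0" unfolding s_def by simp
    have key: "2 * t * c \<le> t^2 * s" for t
    proof -
      have "m + t *\<^sub>R y \<in> M" using sub mM yM by (simp add: subspace_add subspace_scale)
      from best[OF this] have 1: "norm (x - m)^2 \<le> norm ((x - m) - t *\<^sub>R y)^2"
        by (simp add: algebra_simps)
      have 2: "norm ((x - m) - t *\<^sub>R y)^2 = norm (x - m)^2 - 2 * t * c + t^2 * s"
        unfolding c_def s_def power2_norm_eq_inner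
        by (simp add: inner_diff inner_commute algebra_simps power2_eq_square)
      show ?thesis using 1 2 by linarith
    qed
    have "2 * (c / (s+1)) * c \<le> (c/(s+1))^2 * s" by (rule key)
    hence "(s+1)^2 * (2 * (c / (s+1)) * c) \<le> (s+1)^2 * ((c/(s+1))^2 * s)"
      by (rule mult_left_mono) simp
    moreover have "(s+1)^2 * (2 * (c / (s+1)) * c) = 2 * c^2 * (s+1)" using s0
      by (simp add: field_simps power2_eq_square)
    moreover have "(s+1)^2 * ((c/(s+1))^2 * s) = c^2 * s"
    proof -
      have ne: "(s+1)^2 \<noteq> 0" using s0 by simp
      have "(c/(s+1))^2 = c^2 / (s+1)^2" by (rule power_divide)
      thus ?thesis using ne by simp
    qed
    ultimately have "2 * c^2 * (s+1) \<le> c^2 * s" by simp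
    hence "c^2 * (s + 2) \<le> 0" by (simp add: algebra_simps)
    hence "c^2 \<le> 0" using s0 by (simp add: mult_le_0_iff)
    thus ?thesis unfolding c_def by simp
  qed
  thus ?thesis using mM by blast
qed


lemma inner_unique_h:
  fixes p q :: "'h::real_inner"
  assumes "\<And>u. inner p u = inner q u" shows "p = q"
proof -
  have "inner (p - q) (p - q) = 0" using assms by (simp add: inner_diff)
  thus ?thesis by simp
qed

lemma riesz_h:
  fixes \<phi> :: "'h::{real_inner, complete_space} \<Rightarrow> real"
  assumes lin: "linear \<phi>" and cont: "continuous_on UNIV \<phi>"
  shows "\<exists>p. \<forall>u. inner p u = \<phi> u"
proof (cases "\<forall>u. \<phi> u = 0")
  case True thus ?thesis by (intro exI[of _ 0]) simp
next
  case False
  then obtain z where z: "\<phi> z \<noteq> 0" by blast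
  define K where "K = {u. \<phi> u = 0}"
  have "closed (\<phi> -` {0})"
    using continuous_closed_vimage[OF closed_singleton] cont
    by (metis continuous_on_eq_continuous_within UNIV_I)
  moreover have "K = \<phi> -` {0}" unfolding K_def by auto
  ultimately have clK: "closed K" by simp
  have subK: "subspace K" unfolding K_def subspace_def using lin
    by (simp add: linear_add linear_scale linear_0)
  obtain m where m: "m \<in> K" "\<And>y. y \<in> K \<Longrightarrow> inner (z - m) y = 0"
    using projection_h[OF clK subK, of z] by blast
  define w where "w = z - m"
  have pw: "\<phi> w = \<phi> z" using m(1) lin unfolding w_def K_def by (simp add: linear_diff)
  have w0: "w \<noteq> 0" using pw z by (auto simp: linear_0[OF lin])
  have ww: "inner w w > 0" using w0 by simp
  show ?thesis
  proof (intro exI allI)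
    fix u
    have "u - (\<phi> u / \<phi> w) *\<^sub>R w \<in> K" unfolding K_def using pw z lin
      by (simp add: linear_diff linear_scale)
    from m(2)[OF this] have "inner w u - (\<phi> u / \<phi> w) * inner w w = 0"
      unfolding w_def[symmetric] by (simp add: inner_diff)
    hence "inner w u = (\<phi> u / \<phi> w) * inner w w" by simp
    thus "inner ((\<phi> w / inner w w) *\<^sub>R w) u = \<phi> u"
      using ww pw z by (simp add: field_simps)
  qed
qed

lemma density_h:
  fixes A :: "'h::{real_inner, complete_space} set"
  assumes sub: "subspace A" and orth: "\<And>u. (\<forall>a\<in>A. inner a u = 0) \<Longrightarrow> inner b u = 0"
  shows "b \<in> closure A"
proof -
  obtain m where m: "m \<in> closure A" "\<And>y. y \<in> closure A \<Longrightarrow> inner (b - m) y = 0"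
    using projection_h[OF closed_closure closure_subspace_h[OF sub], of b] by blast
  have "\<forall>a\<in>A. inner a (b - m) = 0" using m(2) closure_subset by (force simp: inner_commute)
  hence "inner b (b - m) = 0" by (rule orth)
  moreover have "inner m (b - m) = 0" using m by (simp add: inner_commute)
  ultimately have "inner (b - m) (b - m) = 0" by (simp add: inner_diff_left)
  hence "b = m" by simp
  thus ?thesis using m(1) by simp
qed



lemma cmap_real_crit:
  assumes top: "topspace T = UNIV"
    and crit: "\<And>x e. e > 0 \<Longrightarrow> \<exists>V. openin T V \<and> x \<in> V \<and> (\<forall>y\<in>V. \<bar>g y - g x\<bar> < e)"
  shows "continuous_map T euclideanreal g"
  unfolding continuous_map_def
proof (intro conjI allI impI)
  show "g \<in> topspace T \<rightarrow> topspace euclideanreal" by simp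
  fix S :: "real set" assume "openin euclideanreal S"
  hence oS: "open S" by simp
  show "openin T {x \<in> topspace T. g x \<in> S}"
  proof (subst openin_subopen, intro ballI)
    fix x assume "x \<in> {x \<in> topspace T. g x \<in> S}"
    hence "g x \<in> S" by simp
    then obtain e where e: "e > 0" "ball (g x) e \<subseteq> S" using oS openE by blast
    obtain V where V: "openin T V" "x \<in> V" "\<forall>y\<in>V. \<bar>g y - g x\<bar> < e" using crit[OF e(1)] by blast
    have "V \<subseteq> {x \<in> topspace T. g x \<in> S}"
    proof
      fix y assume "y \<in> V"
      hence "g y \<in> ball (g x) e" using V(3) by (metis abs_minus_commute dist_real_def mem_ball)
      thus "y \<in> {x \<in> topspace T. g x \<in> S}" using e top by auto
    qed
    thus "\<exists>V. openin T V \<and> x \<in> V \<and> V \<subseteq> {x \<in> topspace T. g x \<in> S}" using V by blast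
  qed
qed

lemma tvs_affine_cont:
  assumes "tvs T"
  shows "continuous_map T T (\<lambda>y. c *\<^sub>R (y - x0))"
proof -
  have top: "topspace T = UNIV"
    and add: "continuous_map (prod_topology T T) T (\<lambda>(x, y). x + y)"
    and sc: "continuous_map (prod_topology euclideanreal T) T (\<lambda>(c, x). c *\<^sub>R x)"
    using assms unfolding tvs_def by auto
  have "continuous_map T (prod_topology T T) (\<lambda>y. (y, - x0))"
    using top by (simp add: continuous_map_paired)
  from continuous_map_compose[OF this add]
  have 1: "continuous_map T T (\<lambda>y. y - x0)" by (simp add: o_def)
  have "continuous_map T (prod_topology euclideanreal T) (\<lambda>y. (c, y - x0))"
    using 1 by (simp add: continuous_map_paired)
  from continuous_map_compose[OF this sc] show ?thesis by (simp add: o_def)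
qed

lemma cont_from_bound:
  assumes tv: "tvs T" and lin: "linear g" and U: "openin T U" "0 \<in> U"
    and bnd: "\<And>x. x \<in> U \<Longrightarrow> \<bar>g x\<bar> \<le> C"
  shows "continuous_map T euclideanreal g"
proof (rule cmap_real_crit)
  show top: "topspace T = UNIV" using tv unfolding tvs_def by simp
  fix x0 e :: "_" assume e: "(e::real) > 0"
  have C0: "C \<ge> 0" using bnd[OF U(2)] by simp
  define c where "c = (C + 1) / e"
  have c0: "c > 0" using C0 e unfolding c_def by simp
  define V where "V = {y \<in> topspace T. c *\<^sub>R (y - x0) \<in> U}"
  have "openin T V" unfolding V_def
    using openin_continuous_map_preimage[OF tvs_affine_cont[OF tv] U(1)] .
  moreover have "x0 \<in> V" unfolding V_def using U(2) top by simp
  moreover have "\<bar>g y - g x0\<bar> < e" if "y \<in> V" for y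
  proof -
    have "\<bar>g (c *\<^sub>R (y - x0))\<bar> \<le> C" using bnd that unfolding V_def by simp
    hence "c * \<bar>g y - g x0\<bar> \<le> C" using c0
      by (simp add: linear_scale[OF lin] linear_diff[OF lin] abs_mult)
    hence "\<bar>g y - g x0\<bar> \<le> C / c" using c0 by (simp add: field_simps)
    also have "C / c = C * e / (C + 1)" unfolding c_def using e C0 by (simp add: field_simps)
    also have "\<dots> < e" using e C0 by (simp add: field_simps)
    finally show ?thesis .
  qed
  ultimately show "\<exists>V. openin T V \<and> x0 \<in> V \<and> (\<forall>y\<in>V. \<bar>g y - g x0\<bar> < e)" by blast
qed


lemma restr_sdual:
  assumes S: "subspace S" and u: "u \<in> cdual T"
  shows "restr S u \<in> sdual T S"
proof -
  have lin: "linear u" and cu: "continuous_map T euclideanreal u" using u unfolding cdual_def by auto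
  have "continuous_map (subtopology T S) euclideanreal u"
    using cu by (rule continuous_map_from_subtopology)
  hence "continuous_map (subtopology T S) euclideanreal (restr S u)"
    by (rule continuous_map_eq) (simp add: restr_def)
  moreover have "\<forall>x\<in>S. \<forall>y\<in>S. restr S u (x + y) = restr S u x + restr S u y"
    using S lin by (simp add: restr_def subspace_add linear_add)
  moreover have "\<forall>c. \<forall>x\<in>S. restr S u (c *\<^sub>R x) = c * restr S u x"
    using S lin by (simp add: restr_def subspace_scale linear_scale)
  ultimately show ?thesis unfolding sdual_def by (simp add: restr_def)
qed


theorem lemma2p1:
  fixes TX :: "'x::real_vector topology"
    and TB :: "'b::real_vector topology"
    and \<sigma> \<eta> :: "'x \<Rightarrow> 'x \<Rightarrow> real"
    and Xbulk :: "'x set"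
    and bd :: "('x \<Rightarrow> real) \<Rightarrow> ('b \<Rightarrow> real)"
    and j :: "'x \<Rightarrow> 'h::{real_inner, complete_space}"
  assumes barreled: "barreled TX"
    and sympl: "symplectic_form \<sigma>"
    and bulk: "subspace Xbulk"
    and bd_tvs: "tvs TB"
    and bd_maps: "bd ` sdual TX Xbulk \<subseteq> cdual TB"
    and bd_add: "\<And>u v. u \<in> sdual TX Xbulk \<Longrightarrow> v \<in> sdual TX Xbulk \<Longrightarrow> bd (\<lambda>x. u x + v x) = (\<lambda>y. bd u y + bd v y)"
    and bd_scale: "\<And>c u. u \<in> sdual TX Xbulk \<Longrightarrow> bd (\<lambda>x. c * u x) = (\<lambda>y. c * bd u y)"
    and bd_cont: "continuous_map (weak_star (cdual TX)) (weak_star (cdual TB))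
                    (\<lambda>u. bd (restr Xbulk u))"
    and eta_lin: "\<And>v. linear (\<eta> v)"
    and eta_sym: "\<And>v w. \<eta> v w = \<eta> w v"
    and eta_pos: "\<And>v. v \<noteq> 0 \<Longrightarrow> \<eta> v v > 0"
    and sigma_bound: "\<And>v1 v2. \<bar>\<sigma> v1 v2\<bar> \<le> sqrt (\<eta> v1 v1) * sqrt (\<eta> v2 v2)"
    and cpl_lin: "linear j"
    and cpl_inner: "\<And>v w. inner (j v) (j w) = \<eta> v w"
    and cpl_dense: "closure (range j) = UNIV"
    and hyp1: "continuous_map TX (weak_star (cdual TX)) (\<lambda>v w. \<eta> w v)"
  shows "(\<forall>\<u>. (\<lambda>v. inner (j v) \<u>) \<in> cdual TX)
       \<and> (\<forall>f. linear (\<lambda>\<u>. bd (restr Xbulk (\<lambda>v. inner (j v) \<u>)) f)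
              \<and> continuous_on UNIV (\<lambda>\<u>. bd (restr Xbulk (\<lambda>v. inner (j v) \<u>)) f)
              \<and> (\<exists>!p. \<forall>\<u>. inner p \<u> = bd (restr Xbulk (\<lambda>v. inner (j v) \<u>)) f))
       \<and> ((\<forall>u\<in>cdual TX. bd (restr Xbulk u) = (\<lambda>_. 0) \<longrightarrow> (\<forall>x\<in>Xbulk. u x = 0)) \<longrightarrow>
            closure (j ` Xbulk) \<subseteq>
            closure (range (\<lambda>f. THE p. \<forall>\<u>. inner p \<u> = bd (restr Xbulk (\<lambda>v. inner (j v) \<u>)) f)))"
proof -
  have tvsX: "tvs TX" using barreled unfolding barreled_def by simp
  have top: "topspace TX = UNIV" using tvsX unfolding tvs_def by simp
  have wtop: "\<And>D. topspace (weak_star D) = D" unfolding weak_star_def by simp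
  have eta_j: "\<And>v w. \<eta> v w = inner (j v) (j w)" using cpl_inner by simp
  have eta_cd: "(\<lambda>w. \<eta> w v) \<in> cdual TX" for v
    using continuous_map_image_subset_topspace[OF hyp1] top wtop by auto
  have eta_cont: "continuous_map TX euclideanreal (\<lambda>x. \<eta> w x)" for w
  proof -
    have "(\<lambda>x. \<eta> w x) = (\<lambda>x. \<eta> x w)" using eta_sym by auto
    thus ?thesis using eta_cd[of w] unfolding cdual_def by simp
  qed
  define B where "B = {x. \<forall>w. \<eta> w w \<le> 1 \<longrightarrow> \<bar>\<eta> w x\<bar> \<le> 1}"
  have njw: "norm (j w) \<le> 1" if "\<eta> w w \<le> 1" for w
  proof -
    have "norm (j w)^2 \<le> 1" using that by (simp add: power2_norm_eq_inner eta_j)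
    thus ?thesis by (simp add: power_le_one_iff abs_le_iff power2_le_iff_abs_le)
  qed
  have CS: "\<bar>\<eta> w x\<bar> \<le> norm (j w) * norm (j x)" for w x
    unfolding eta_j by (rule Cauchy_Schwarz_ineq2)
  have "barrel TX B"
    unfolding barrel_def
  proof (intro conjI allI impI)
    have "B = (\<Inter>w\<in>{w. \<eta> w w \<le> 1}. {x \<in> topspace TX. \<eta> w x \<in> {-1..1}})"
      unfolding B_def using top by (auto simp: abs_le_iff)
    moreover have "closedin TX (\<Inter>w\<in>{w. \<eta> w w \<le> 1}. {x \<in> topspace TX. \<eta> w x \<in> {-1..1}})"
    proof (rule closedin_INT)
      have "\<eta> 0 0 = 0" using eta_j cpl_lin by (simp add: linear_0)
      hence "0 \<in> {w. \<eta> w w \<le> 1}" by simp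
      thus "{w. \<eta> w w \<le> 1} \<noteq> {}" by blast
      fix w show "closedin TX {x \<in> topspace TX. \<eta> w x \<in> {-1..1}}"
        by (rule closedin_continuous_map_preimage[OF eta_cont]) simp
    qed
    ultimately show "closedin TX B" by simp
  next
    show "convex B" unfolding convex_def
    proof (intro ballI allI impI)
      fix x y and a b :: real assume xy: "x \<in> B" "y \<in> B" and ab: "0 \<le> a" "0 \<le> b" "a + b = 1"
      show "a *\<^sub>R x + b *\<^sub>R y \<in> B" unfolding B_def
      proof (intro allI impI CollectI)
        fix w assume w: "\<eta> w w \<le> 1"
        have "\<eta> w (a *\<^sub>R x + b *\<^sub>R y) = a * \<eta> w x + b * \<eta> w y"
          using eta_lin[of w] by (simp add: linear_add linear_scale)
        moreover have "\<bar>\<eta> w x\<bar> \<le> 1" "\<bar>\<eta> w y\<bar> \<le> 1" using xy w unfolding B_def by auto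
        moreover have "\<bar>a * \<eta> w x + b * \<eta> w y\<bar> \<le> \<bar>a * \<eta> w x\<bar> + \<bar>b * \<eta> w y\<bar>"
          by (rule abs_triangle_ineq)
        moreover have "\<bar>a * \<eta> w x\<bar> + \<bar>b * \<eta> w y\<bar> = a * \<bar>\<eta> w x\<bar> + b * \<bar>\<eta> w y\<bar>"
          using ab by (simp add: abs_mult)
        moreover have "a * \<bar>\<eta> w x\<bar> + b * \<bar>\<eta> w y\<bar> \<le> a * 1 + b * 1"
          using ab \<open>\<bar>\<eta> w x\<bar> \<le> 1\<close> \<open>\<bar>\<eta> w y\<bar> \<le> 1\<close> by (intro add_mono mult_left_mono) auto
        ultimately have "\<bar>\<eta> w (a *\<^sub>R x + b *\<^sub>R y)\<bar> \<le> a * 1 + b * 1" by simp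
        thus "\<bar>\<eta> w (a *\<^sub>R x + b *\<^sub>R y)\<bar> \<le> 1" using ab by simp
      qed
    qed
  next
    fix c :: real and x assume c: "\<bar>c\<bar> \<le> 1" and x: "x \<in> B"
    show "c *\<^sub>R x \<in> B" unfolding B_def
    proof (intro allI impI CollectI)
      fix w assume w: "\<eta> w w \<le> 1"
      have "\<bar>\<eta> w (c *\<^sub>R x)\<bar> = \<bar>c\<bar> * \<bar>\<eta> w x\<bar>" using eta_lin[of w] by (simp add: linear_scale abs_mult)
      also have "\<dots> \<le> 1 * 1" using c x w unfolding B_def by (intro mult_mono) auto
      finally show "\<bar>\<eta> w (c *\<^sub>R x)\<bar> \<le> 1" by simp
    qed
  next
    fix x
    define e where "e = 1 / (norm (j x) + 1)"
    have e0: "e > 0" unfolding e_def by (simp add: add_nonneg_pos)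
    show "\<exists>e>0. \<forall>t. \<bar>t\<bar> \<le> e \<longrightarrow> t *\<^sub>R x \<in> B"
    proof (intro exI[of _ e] conjI allI impI e0)
      fix t :: real assume t: "\<bar>t\<bar> \<le> e"
      show "t *\<^sub>R x \<in> B" unfolding B_def
      proof (intro allI impI CollectI)
        fix w assume w: "\<eta> w w \<le> 1"
        have "\<bar>\<eta> w (t *\<^sub>R x)\<bar> = \<bar>t\<bar> * \<bar>\<eta> w x\<bar>" using eta_lin[of w] by (simp add: linear_scale abs_mult)
        also have "\<dots> \<le> e * (1 * norm (j x))"
        proof (rule mult_mono)
          have "norm (j w) * norm (j x) \<le> 1 * norm (j x)" using njw[OF w] by (intro mult_right_mono) auto
          thus "\<bar>\<eta> w x\<bar> \<le> 1 * norm (j x)" using CS[of w x] by linarith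
        qed (use t e0 in auto)
        also have "\<dots> \<le> 1" unfolding e_def
          by (simp add: divide_le_eq add_nonneg_pos)
        finally show "\<bar>\<eta> w (t *\<^sub>R x)\<bar> \<le> 1" .
      qed
    qed
  qed
  then obtain U where U: "openin TX U" "0 \<in> U" "U \<subseteq> B" using barreled unfolding barreled_def by blast
  have nU: "norm (j x) \<le> 1" if "x \<in> U" for x
  proof (rule ccontr)
    assume "\<not> norm (j x) \<le> 1"
    hence n1: "norm (j x) > 1" by simp
    hence jx0: "j x \<noteq> 0" by (metis norm_zero not_one_less_zero)
    define w where "w = (1 / norm (j x)) *\<^sub>R x"
    have jw: "j w = (1 / norm (j x)) *\<^sub>R j x" unfolding w_def using cpl_lin by (simp add: linear_scale)
    have "\<eta> w w = 1" unfolding eta_j jw using n1 jx0 by (simp add: power2_norm_eq_inner[symmetric] power2_eq_square)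
    moreover have "\<eta> w x = norm (j x)" unfolding eta_j jw using n1 jx0
      by (simp add: power2_norm_eq_inner[symmetric] power2_eq_square)
    moreover have "x \<in> B" using that U(3) by blast
    moreover from \<open>x \<in> B\<close> have "\<eta> w w \<le> 1 \<longrightarrow> \<bar>\<eta> w x\<bar> \<le> 1" unfolding B_def by blast
    ultimately have "\<bar>norm (j x)\<bar> \<le> 1" by simp
    thus False using n1 by simp
  qed
  define \<Phi> where "\<Phi> = (\<lambda>u v. inner (j v) (u::'h))"
  have Phi_cd: "\<Phi> u \<in> cdual TX" for u
  proof -
    have lin: "linear (\<Phi> u)" unfolding \<Phi>_def
      using linear_compose[OF cpl_lin bounded_linear.linear[OF bounded_linear_inner_left]]
      by (simp add: o_def)
    have "continuous_map TX euclideanreal (\<Phi> u)"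
    proof (rule cont_from_bound[OF tvsX lin U(1,2)])
      fix x assume "x \<in> U"
      have "\<bar>\<Phi> u x\<bar> \<le> norm (j x) * norm u" unfolding \<Phi>_def by (rule Cauchy_Schwarz_ineq2)
      also have "\<dots> \<le> 1 * norm u" using nU[OF \<open>x \<in> U\<close>] by (intro mult_right_mono) auto
      finally show "\<bar>\<Phi> u x\<bar> \<le> norm u" by simp
    qed
    thus ?thesis using lin unfolding cdual_def by simp
  qed
  define R where "R = (\<lambda>u. restr Xbulk (\<Phi> u))"
  have R_sd: "R u \<in> sdual TX Xbulk" for u unfolding R_def by (rule restr_sdual[OF bulk Phi_cd])
  have bdR: "bd (R u) \<in> cdual TB" for u using bd_maps R_sd by blast
  have R_add: "R (a + b) = (\<lambda>x. R a x + R b x)" for a b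
    unfolding R_def restr_def \<Phi>_def by (auto simp: inner_add_right)
  have R_scale: "R (c *\<^sub>R a) = (\<lambda>x. c * R a x)" for c a
    unfolding R_def restr_def \<Phi>_def by auto
  define \<phi> where "\<phi> = (\<lambda>f u. bd (R u) f)"
  have phi_lin: "linear (\<phi> f)" for f
  proof (rule linearI)
    fix a b show "\<phi> f (a + b) = \<phi> f a + \<phi> f b" unfolding \<phi>_def R_add using bd_add[OF R_sd R_sd] by simp
  next
    fix c :: real and a show "\<phi> f (c *\<^sub>R a) = c *\<^sub>R \<phi> f a" unfolding \<phi>_def R_scale using bd_scale[OF R_sd] by simp
  qed
  have phi_cont: "continuous_on UNIV (\<phi> f)" for f
  proof -
    have "continuous_map euclidean (weak_star (cdual TX)) \<Phi>"
      unfolding weak_star_def continuous_map_in_subtopology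
    proof
      show "continuous_map euclidean (product_topology (\<lambda>_. euclideanreal) UNIV) \<Phi>"
        unfolding continuous_map_componentwise_UNIV \<Phi>_def
        by (auto intro!: continuous_intros)
      show "\<Phi> \<in> topspace euclidean \<rightarrow> cdual TX" using Phi_cd by auto
    qed
    from continuous_map_compose[OF this bd_cont]
    have c1: "continuous_map euclidean (weak_star (cdual TB)) (\<lambda>u. bd (R u))"
      unfolding R_def by (simp add: o_def)
    have c2: "continuous_map (weak_star (cdual TB)) euclideanreal (\<lambda>g. g f)"
      unfolding weak_star_def
      by (rule continuous_map_from_subtopology) (rule continuous_map_product_projection, simp)
    from continuous_map_compose[OF c1 c2] show ?thesis unfolding \<phi>_def by (simp add: o_def)
  qed
  have ex1: "\<exists>!p. \<forall>u. inner p u = \<phi> f u" for f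
  proof -
    obtain p where p: "\<forall>u. inner p u = \<phi> f u" using riesz_h[OF phi_lin phi_cont] by blast
    show ?thesis
    proof (rule ex1I[of _ p])
      show "\<forall>u. inner p u = \<phi> f u" by (rule p)
      fix q assume "\<forall>u. inner q u = \<phi> f u"
      thus "q = p" using p by (auto intro!: inner_unique_h[of q p])
    qed
  qed
  define P where "P = (\<lambda>f. THE p. \<forall>u. inner p u = \<phi> f u)"
  have PP: "inner (P f) u = \<phi> f u" for f u
    using theI'[OF ex1[of f]] unfolding P_def by blast
  have P_lin: "linear P"
  proof (rule linearI)
    fix f g
    show "P (f + g) = P f + P g"
    proof (rule inner_unique_h)
      fix u
      have "linear (bd (R u))" using bdR unfolding cdual_def by simp
      thus "inner (P (f + g)) u = inner (P f + P g) u"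
        by (simp add: PP inner_add_left \<phi>_def linear_add)
    qed
  next
    fix c :: real and f
    show "P (c *\<^sub>R f) = c *\<^sub>R P f"
    proof (rule inner_unique_h)
      fix u
      have "linear (bd (R u))" using bdR unfolding cdual_def by simp
      thus "inner (P (c *\<^sub>R f)) u = inner (c *\<^sub>R P f) u"
        by (simp add: PP \<phi>_def linear_scale)
    qed
  qed
  have part3: "closure (j ` Xbulk) \<subseteq> closure (range P)"
    if hyp2: "\<forall>u\<in>cdual TX. bd (restr Xbulk u) = (\<lambda>_. 0) \<longrightarrow> (\<forall>x\<in>Xbulk. u x = 0)"
  proof (rule closure_minimal[OF _ closed_closure], rule subsetI)
    fix y assume "y \<in> j ` Xbulk"
    then obtain x where x: "x \<in> Xbulk" "y = j x" by blast
    have "j x \<in> closure (range P)"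
    proof (rule density_h)
      show "subspace (range P)" by (rule linear_subspace_image[OF P_lin subspace_UNIV])
      fix u assume "\<forall>a\<in>range P. inner a u = 0"
      hence "\<forall>f. \<phi> f u = 0" using PP by auto
      hence "bd (restr Xbulk (\<Phi> u)) = (\<lambda>_. 0)" unfolding \<phi>_def R_def by auto
      hence "\<Phi> u x = 0" using hyp2 Phi_cd x(1) by blast
      thus "inner (j x) u = 0" unfolding \<Phi>_def .
    qed
    thus "y \<in> closure (range P)" using x by simp
  qed
  have eq: "\<And>f u. bd (restr Xbulk (\<lambda>v. inner (j v) u)) f = \<phi> f u"
    unfolding \<phi>_def R_def \<Phi>_def by simp
  have rP: "(\<lambda>f. THE p. \<forall>u. inner p u = \<phi> f u) = P" unfolding P_def ..
  show ?thesis unfolding eq rP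
  proof (intro conjI allI impI)
    fix u show "(\<lambda>v. inner (j v) u) \<in> cdual TX" using Phi_cd[of u] unfolding \<Phi>_def .
  next
    fix f show "linear (\<phi> f)" by (rule phi_lin)
  next
    fix f show "continuous_on UNIV (\<phi> f)" by (rule phi_cont)
  next
    fix f show "\<exists>!p. \<forall>u. inner p u = \<phi> f u" by (rule ex1)
  next
    assume "\<forall>u\<in>cdual TX. bd (restr Xbulk u) = (\<lambda>_. 0) \<longrightarrow> (\<forall>x\<in>Xbulk. u x = 0)"
    thus "closure (j ` Xbulk) \<subseteq> closure (range P)" by (rule part3)
  qed
qed

end
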